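(* Let $\varphi=\frac{1+\sqrt5}{2}$. The power series $[\varphi]_q\in\mathbb{Z}[[q]]$ satisfies $$q[\varphi]_q^2-(q^2+q-1)[\varphi]_q-1=0.$$
   Context: For an integer $a\geq1$ put $[a]_q=1+q+\cdots+q^{a-1}$ and $[a]_{q^{-1}}=1+q^{-1}+\cdots+q^{-(a-1)}$. Every rational number $r/s>1$ has a unique even-length regular continued fraction $r/s=[a_1,\ldots,a_{2m}]$ with $a_i\in\mathbb{Z}_{\geq1}$. Its $q$-deformation is the rational function $$\left[\tfrac{r}{s}\right]_q=[a_1]_q+\cfrac{q^{a_1}}{[a_2]_{q^{-1}}+\cfrac{q^{-a_2}}{[a_3]_q+\cfrac{q^{a_3}}{\ddots+\cfrac{q^{a_{2m-1}}}{[a_{2m}]_{q^{-1}}}}}}.$$ One also sets $[1]_q=1$. Each $[r/s]_q$ is identified with its Taylor expansion at $q=0$. For an irrational real number $x>1$ with continued fraction $x=[a_1,a_2,\ldots]$ and convergents $x_n=[a_1,\ldots,a_n]$, define $$[x]_q:=\sum_{k\geq0}\varkappa_kq^k,\qquad \varkappa_k=\lim_{n\to\infty}\bigl(\text{coefficient of }q^k\text{ in }[x_n]_q\bigr).$$ These limits exist and are eventually attained. Here $\varphi=[1,1,1,\ldots]$. *)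

theory Defs
  imports Complex_Main "HOL-Computational_Algebra.Formal_Laurent_Series"
begin

text \<open>Rational functions in q are identified with their Laurent expansions at q = 0
  (real coefficients); q is fls_X, q^(-1) is fls_X_inv.\<close>

definition qint :: "nat \<Rightarrow> real fls" where
  "qint a = (\<Sum>i<a. fls_X ^ i)"

definition qint_inv :: "nat \<Rightarrow> real fls" where
  "qint_inv a = (\<Sum>i<a. fls_X_inv ^ i)"

fun qcf_aux :: "bool \<Rightarrow> nat list \<Rightarrow> real fls" where
  "qcf_aux b [] = 0"
| "qcf_aux b [a] = (if b then qint a else qint_inv a)"
| "qcf_aux b (a # a' # as) =
     (if b then qint a + fls_X ^ a / qcf_aux False (a' # as)
      else qint_inv a + fls_X_inv ^ a / qcf_aux True (a' # as))"

definition qcf :: "nat list \<Rightarrow> real fls" where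
  "qcf as = qcf_aux True as"

fun cf_val :: "nat list \<Rightarrow> real" where
  "cf_val [] = 0"
| "cf_val [a] = real a"
| "cf_val (a # a' # as) = real a + 1 / cf_val (a' # as)"

definition qrat :: "real \<Rightarrow> real fls" where
  "qrat x = (if x = 1 then 1 else
     qcf (THE as. as \<noteq> [] \<and> even (length as) \<and> (\<forall>a\<in>set as. a \<ge> 1) \<and> cf_val as = x))"

fun cf_rem :: "real \<Rightarrow> nat \<Rightarrow> real" where
  "cf_rem x 0 = x"
| "cf_rem x (Suc n) = 1 / (cf_rem x n - of_int \<lfloor>cf_rem x n\<rfloor>)"

definition cf_digit :: "real \<Rightarrow> nat \<Rightarrow> nat" where
  "cf_digit x n = nat \<lfloor>cf_rem x n\<rfloor>"

text \<open>n-th convergent x_n = [a_1,...,a_n] (n \<ge> 1).\<close>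
definition convergent_cf :: "real \<Rightarrow> nat \<Rightarrow> real" where
  "convergent_cf x n = cf_val (map (cf_digit x) [0..<n])"

definition qreal :: "real \<Rightarrow> real fps" where
  "qreal x = Abs_fps (\<lambda>k. lim (\<lambda>n. fls_nth (qrat (convergent_cf x (Suc n))) (int k)))"

definition golden :: real where
  "golden = (1 + sqrt 5) / 2"

end

theory Submission imports Defs begin

lemma XXinv: "(fls_X :: real fls) * fls_X_inv = 1"
  by (simp add: fls_X_inv_times_conv_shift fls_X_conv_shift_1)

definition Tf :: "real fps \<Rightarrow> real fps" where
  "Tf b = 1 + fps_X^2 * b * inverse (1 + fps_X * b)"

lemma inv1: "(1 + fps_X * (b::real fps)) * inverse (1 + fps_X * b) = 1"
  by (rule inverse_mult_eq_1') simp

lemma Tf_eq: "(1 + fps_X * b) * Tf b = 1 + fps_X * b + fps_X^2 * b"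
proof -
  have "(1 + fps_X * b) * Tf b = (1 + fps_X * b) + fps_X^2 * b * ((1 + fps_X * b) * inverse (1 + fps_X * b))"
    unfolding Tf_def by (simp add: algebra_simps)
  thus ?thesis using inv1[of b] by simp
qed

lemma Tf_0: "Tf b $ 0 = 1"
  unfolding Tf_def by (simp add: power2_eq_square mult.assoc)

lemma Tf_diff: "Tf f - Tf g = fps_X^2 * (f - g) * (inverse (1 + fps_X * f) * inverse (1 + fps_X * g))"
proof -
  define iu where "iu = inverse (1 + fps_X * f)"
  define iv where "iv = inverse (1 + fps_X * g)"
  have u: "(1 + fps_X * f) * iu = 1" using inv1 iu_def by simp
  have v: "(1 + fps_X * g) * iv = 1" using inv1 iv_def by simp
  have a: "f * iu = f * iu * ((1 + fps_X * g) * iv)" using v by simp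
  have b: "g * iv = g * iv * ((1 + fps_X * f) * iu)" using u by simp
  have "f * iu - g * iv = (f * (1 + fps_X * g) - g * (1 + fps_X * f)) * (iu * iv)"
    apply (subst a, subst b) by (simp add: algebra_simps)
  also have "f * (1 + fps_X * g) - g * (1 + fps_X * f) = f - g" by (simp add: algebra_simps)
  finally have "f * iu - g * iv = (f - g) * (iu * iv)" .
  moreover have "Tf f - Tf g = fps_X^2 * (f * iu - g * iv)"
    unfolding Tf_def iu_def[symmetric] iv_def[symmetric] by (simp add: algebra_simps)
  ultimately have "Tf f - Tf g = fps_X^2 * ((f - g) * (iu * iv))" by simp
  thus ?thesis unfolding iu_def iv_def by (simp add: mult.assoc)
qed

definition eqm :: "nat \<Rightarrow> real fps \<Rightarrow> real fps \<Rightarrow> bool" where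
  "eqm k f g \<longleftrightarrow> (\<forall>i<k. f $ i = g $ i)"

lemma eqm_factor:
  assumes "eqm k f g" shows "f - g = fps_X^k * fps_shift k (f - g)"
proof (rule fps_ext)
  fix n show "(f - g) $ n = (fps_X^k * fps_shift k (f - g)) $ n"
    using assms unfolding eqm_def by (auto simp: fps_X_power_mult_nth)
qed

lemma eqm_Tf:
  assumes "eqm k f g" shows "eqm (k+2) (Tf f) (Tf g)"
proof -
  define h where "h = fps_shift k (f - g)"
  define W where "W = inverse (1 + fps_X * f) * inverse (1 + fps_X * g)"
  have "Tf f - Tf g = fps_X^2 * (fps_X^k * h) * W"
    unfolding Tf_diff W_def h_def using eqm_factor[OF assms] by metis
  also have "\<dots> = fps_X^(k+2) * (h * W)" by (simp only: power_add mult.assoc mult.commute mult.left_commute)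
  finally have "Tf f - Tf g = fps_X^(k+2) * (h * W)" .
  moreover have "\<forall>i<k+2. (fps_X^(k+2) * (h * W)) $ i = 0" unfolding fps_X_power_mult_nth by simp
  ultimately have "\<forall>i<k+2. (Tf f - Tf g) $ i = 0" by simp
  thus ?thesis unfolding eqm_def by simp
qed

lemma eqm_iter: "eqm k f g \<Longrightarrow> eqm (k + 2*j) ((Tf^^j) f) ((Tf^^j) g)"
proof (induction j)
  case 0 thus ?case by simp
next
  case (Suc j)
  have "eqm (k + 2*j + 2) ((Tf^^Suc j) f) ((Tf^^Suc j) g)"
    using eqm_Tf[OF Suc.IH[OF Suc.prems]] by simp
  thus ?case by (simp add: add.assoc)
qed

lemma iter_0: "b $ 0 = 1 \<Longrightarrow> (Tf^^i) b $ 0 = 1"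
  by (cases i) (simp_all add: Tf_0)

lemma stab:
  assumes "b $ 0 = 1" "k \<le> m"
  shows "eqm (2*k+1) ((Tf^^m) b) ((Tf^^k) 1)"
proof -
  have m: "m = k + (m - k)" using assms(2) by simp
  have "(Tf^^m) b = (Tf^^k) ((Tf^^(m-k)) b)"
    by (subst m) (simp add: funpow_add)
  moreover have "eqm 1 ((Tf^^(m-k)) b) 1"
    using iter_0[OF assms(1)] unfolding eqm_def by simp
  ultimately show ?thesis using eqm_iter[of 1 _ 1 k] by (simp add: add.commute)
qed

definition P :: "real fps" where "P = Abs_fps (\<lambda>k. (Tf^^k) 1 $ k)"

lemma P_eqm: "eqm (2*j+1) P ((Tf^^j) 1)"
  unfolding eqm_def
proof (intro allI impI)
  fix i assume i: "i < 2*j+1"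
  show "P $ i = (Tf^^j) 1 $ i"
  proof (cases "i \<le> j")
    case True
    from stab[of 1 i j, OF _ True] show ?thesis unfolding eqm_def P_def by simp
  next
    case False
    from stab[of 1 j i] False i show ?thesis unfolding eqm_def P_def by simp
  qed
qed

lemma Tf_P: "Tf P = P"
proof (rule fps_ext)
  fix i
  have "eqm (2*i+1+2) (Tf P) (Tf ((Tf^^i) 1))" by (rule eqm_Tf[OF P_eqm])
  moreover have "eqm (2*(Suc i)+1) P ((Tf^^Suc i) 1)" by (rule P_eqm)
  ultimately show "Tf P $ i = P $ i" unfolding eqm_def by simp
qed

lemma P_equation: "fps_X * P\<^sup>2 - (fps_X\<^sup>2 + fps_X - 1) * P - 1 = 0"
proof -
  have "(1 + fps_X * P) * P = 1 + fps_X * P + fps_X^2 * P" using Tf_eq[of P] Tf_P by simp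
  thus ?thesis by (simp add: algebra_simps power2_eq_square)
qed


lemma cf_val_Cons: "ys \<noteq> [] \<Longrightarrow> cf_val (x # ys) = real x + 1 / cf_val ys"
  by (cases ys) auto

lemma qcf_aux_Cons: "ys \<noteq> [] \<Longrightarrow> qcf_aux b (x # ys) =
  (if b then qint x + fls_X ^ x / qcf_aux False ys else qint_inv x + fls_X_inv ^ x / qcf_aux True ys)"
  by (cases ys) auto

lemma cf_ge: "as \<noteq> [] \<Longrightarrow> \<forall>a\<in>set as. a \<ge> 1 \<Longrightarrow> cf_val as \<ge> real (hd as)"
proof (induction as rule: cf_val.induct)
  case (3 a a' as)
  have "cf_val (a' # as) \<ge> real a'" using 3 by simp
  moreover have "a' \<ge> 1" using 3 by simp
  ultimately have "cf_val (a' # as) > 0" by linarith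
  thus ?case by simp
qed auto

lemma cf_ge1: "as \<noteq> [] \<Longrightarrow> \<forall>a\<in>set as. a \<ge> 1 \<Longrightarrow> cf_val as \<ge> 1"
  using cf_ge[of as] by (cases as) auto

lemma cf_gt: "\<forall>a\<in>set (a # a' # as). a \<ge> 1 \<Longrightarrow>
   real a < cf_val (a # a' # as) \<and> cf_val (a # a' # as) \<le> real a + 1"
proof -
  assume h: "\<forall>a\<in>set (a # a' # as). a \<ge> 1"
  have "cf_val (a' # as) \<ge> 1" using cf_ge1[of "a' # as"] h by simp
  thus ?thesis by simp
qed

lemma cf_eq1: "as \<noteq> [] \<Longrightarrow> \<forall>a\<in>set as. a \<ge> 1 \<Longrightarrow> cf_val as = 1 \<Longrightarrow> as = [1]"
proof (cases as rule: cf_val.cases)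
  case (3 a a' r)
  assume h: "\<forall>a\<in>set as. a \<ge> 1" "cf_val as = 1"
  have "\<forall>x\<in>set (a # a' # r). x \<ge> 1" using h 3 by simp
  from cf_gt[OF this] have "real a < cf_val as" using 3 by simp
  moreover have "real a \<ge> 1" using h 3 by simp
  ultimately show ?thesis using h by linarith
qed auto

lemma nat_between: "real a = real b + t \<Longrightarrow> 0 < t \<Longrightarrow> t < 1 \<Longrightarrow> False"
proof -
  assume h: "real a = real b + t" "0 < t" "t < 1"
  have "real b < real a" "real a < real (b + 1)" using h by auto
  hence "b < a" "a < b + 1" by (simp_all only: of_nat_less_iff)
  thus False by simp
qed

lemma cf_unique:
  "as \<noteq> [] \<Longrightarrow> bs \<noteq> [] \<Longrightarrow> \<forall>a\<in>set as. a \<ge> 1 \<Longrightarrow> \<forall>b\<in>set bs. b \<ge> 1 \<Longrightarrow>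
   even (length as) = even (length bs) \<Longrightarrow> cf_val as = cf_val bs \<Longrightarrow> as = bs"
proof (induction as arbitrary: bs)
  case Nil thus ?case by simp
next
  case (Cons a as')
  show ?case
  proof (cases as')
    case Nil
    show ?thesis
    proof (cases bs rule: cf_val.cases)
      case 1 thus ?thesis using Cons by simp
    next
      case (2 b) thus ?thesis using Cons Nil by simp
    next
      case (3 b b' r')
      have "r' \<noteq> []" using Cons.prems(5) Nil 3 by auto
      then obtain c r'' where r': "r' = c # r''" by (cases r') auto
      have "real b' < cf_val (b' # r')" using cf_gt[of b' c r''] Cons.prems(4) 3 r' by simp
      moreover have "b' \<ge> 1" using Cons.prems(4) 3 by simp
      ultimately have y: "cf_val (b' # r') > 1" by linarith
      have "real a = real b + 1 / cf_val (b' # r')" using Cons.prems(6) Nil 3 by simp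
      from nat_between[OF this] y show ?thesis by simp
    qed
  next
    case (Cons a' r)
    note as' = Cons
    show ?thesis
    proof (cases bs rule: cf_val.cases)
      case 1 thus ?thesis using Cons.prems by simp
    next
      case (2 b)
      have "r \<noteq> []" using Cons.prems(5) as' 2 by auto
      then obtain c r'' where r': "r = c # r''" by (cases r) auto
      have "real a' < cf_val (a' # r)" using cf_gt[of a' c r''] Cons.prems(3) as' r' by simp
      moreover have "a' \<ge> 1" using Cons.prems(3) as' by simp
      ultimately have y: "cf_val (a' # r) > 1" by linarith
      have "real b = real a + 1 / cf_val (a' # r)" using Cons.prems(6) as' 2 by simp
      from nat_between[OF this] y show ?thesis by simp
    next
      case (3 b b' r')
      define x where "x = cf_val (a' # r)"
      define y where "y = cf_val (b' # r')"
      have x1: "x \<ge> 1" unfolding x_def using cf_ge1[of "a' # r"] Cons.prems(3) as' by simp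
      have y1: "y \<ge> 1" unfolding y_def using cf_ge1[of "b' # r'"] Cons.prems(4) 3 by simp
      have eq: "real a + 1 / x = real b + 1 / y" using Cons.prems(6) as' 3 unfolding x_def y_def by simp
      have xe: "x = 1 \<Longrightarrow> a' # r = [1]" unfolding x_def using cf_eq1[of "a' # r"] Cons.prems(3) as' by simp
      have ye: "y = 1 \<Longrightarrow> b' # r' = [1]" unfolding y_def using cf_eq1[of "b' # r'"] Cons.prems(4) 3 by simp
      consider "x = 1" "y = 1" | "x = 1" "y > 1" | "x > 1" "y = 1" | "x > 1" "y > 1"
        using x1 y1 by linarith
      thus ?thesis
      proof cases
        case 1
        hence "a = b" using eq by simp
        thus ?thesis using 1 xe ye as' 3 by simp
      next
        case 2
        have "real (a + 1) = real b + 1 / y" using eq 2 by simp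
        from nat_between[OF this] 2 show ?thesis by simp
      next
        case 4
        have "real a = real b + (1/y - 1/x)" using eq by simp
        hence ab: "a = b"
        proof -
          assume h: "real a = real b + (1/y - 1/x)"
          have "0 < 1/x" "1/x < 1" "0 < 1/y" "1/y < 1" using 4 by auto
          hence "real b < real a + 1" "real a < real b + 1" using h by linarith+
          hence "real b < real (a + 1)" "real a < real (b + 1)" by simp_all
          hence "b < a + 1" "a < b + 1" by (simp_all only: of_nat_less_iff)
          thus ?thesis by simp
        qed
        hence "x = y" using eq by simp
        hence "a' # r = b' # r'"
          using Cons.IH[of "b' # r'"] Cons.prems as' 3 unfolding x_def y_def by simp
        thus ?thesis using ab as' 3 by simp
      next
        case 3
        have "real (b + 1) = real a + 1 / x" using eq 3 by simp
        from nat_between[OF this] 3 show ?thesis by simp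
      qed
    qed
  qed
qed


lemma qint1: "qint 1 = 1" "qint (Suc 0) = 1" by (simp_all add: qint_def)
lemma qint_inv1: "qint_inv 1 = 1" "qint_inv (Suc 0) = 1" by (simp_all add: qint_inv_def)
lemma qint_inv2: "qint_inv 2 = 1 + fls_X_inv" by (simp add: qint_inv_def numeral_2_eq_2)

lemma alg:
  fixes X I B :: "'a::field"
  assumes XI: "X * I = 1" and B0: "B \<noteq> 0" and U0: "1 + X * B \<noteq> 0"
  shows "1 + X / (1 + I / B) = (1 + X * B + X^2 * B) / (1 + X * B)"
proof -
  have I0: "I \<noteq> 0" using XI by auto
  have "1 + I / B = I * (1 + X * B) / B"
    using B0 XI by (simp add: field_simps)
  hence "X / (1 + I / B) = X * B / (I * (1 + X * B))" using B0 I0 U0 by simp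
  also have "\<dots> = (X * B * (X * I)) / (I * (1 + X * B))" using XI by simp
  also have "\<dots> = (X^2 * B) * I / ((1 + X * B) * I)" by (simp add: power2_eq_square ac_simps)
  also have "\<dots> = X^2 * B / (1 + X * B)" using I0 by (rule mult_divide_mult_cancel_right)
  finally show ?thesis using U0 by (simp add: field_simps)
qed

lemma step:
  assumes "b $ 0 = 1"
  shows "1 + fls_X / (1 + fls_X_inv / fps_to_fls b) = fps_to_fls (Tf b)"
proof -
  define B where "B = fps_to_fls b"
  have B0: "B \<noteq> 0" unfolding B_def using assms by auto
  have Xi: "fls_X_inv = inverse (fls_X :: real fls)"
    using XXinv by (metis inverse_unique)
  have X0: "(fls_X :: real fls) \<noteq> 0" by simp
  have U: "fps_to_fls (1 + fps_X * b) = 1 + fls_X * B" unfolding B_def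
    by (simp add: fls_times_fps_to_fls)
  have U0: "1 + fls_X * B \<noteq> 0"
  proof -
    have "(1 + fps_X * b) \<noteq> 0" proof
      assume "1 + fps_X * b = 0"
      hence "(1 + fps_X * b) $ 0 = 0" by simp
      thus False by simp
    qed
    hence "fps_to_fls (1 + fps_X * b) \<noteq> 0" by (simp only: fps_to_fls_eq_0_iff) simp
    thus ?thesis unfolding U .
  qed
  have "fps_to_fls ((1 + fps_X * b) * Tf b) = fps_to_fls (1 + fps_X * b + fps_X^2 * b)"
    by (simp add: Tf_eq)
  hence "(1 + fls_X * B) * fps_to_fls (Tf b) = 1 + fls_X * B + fls_X^2 * B"
    unfolding B_def by (simp add: fls_times_fps_to_fls fps_to_fls_power)
  hence T: "fps_to_fls (Tf b) = (1 + fls_X * B + fls_X^2 * B) / (1 + fls_X * B)"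
    using U0 by (simp add: field_simps)
  have U0': "fls_X * B + 1 \<noteq> 0" using U0 by (simp add: add.commute)
  show ?thesis unfolding B_def[symmetric] T by (rule alg[OF XXinv B0 U0])
qed

lemma qcf_iter:
  assumes "tl0 \<noteq> []" "qcf_aux True tl0 = fps_to_fls t" "t $ 0 = 1"
  shows "qcf_aux True (replicate (2*j) 1 @ tl0) = fps_to_fls ((Tf^^j) t)"
proof (induction j)
  case 0 thus ?case using assms by simp
next
  case (Suc j)
  have r: "replicate (2 * Suc j) 1 @ tl0 = 1 # 1 # (replicate (2*j) 1 @ tl0)" by simp
  have ne: "replicate (2*j) 1 @ tl0 \<noteq> []" using assms(1) by simp
  have ne2: "1 # (replicate (2*j) 1 @ tl0) \<noteq> []" by simp
  have "qcf_aux True (1 # 1 # (replicate (2*j) 1 @ tl0)) =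
     1 + fls_X / (1 + fls_X_inv / fps_to_fls ((Tf^^j) t))"
    unfolding qcf_aux_Cons[OF ne2] qcf_aux_Cons[OF ne] Suc.IH by (simp add: qint1 qint_inv1)
  also have "\<dots> = fps_to_fls ((Tf^^Suc j) t)" using step[OF iter_0[OF assms(3)]] by simp
  finally show ?case unfolding r .
qed

definition st :: "nat \<Rightarrow> real fps" where
  "st n = (Tf^^(n div 2)) (if even n then 1 else 1 + fps_X)"

lemma cf_app: "ys \<noteq> [] \<Longrightarrow> zs \<noteq> [] \<Longrightarrow> cf_val ys = cf_val zs \<Longrightarrow> cf_val (xs @ ys) = cf_val (xs @ zs)"
  by (induction xs) (auto simp: cf_val_Cons)

lemma rep_gt1: "cf_val (replicate (Suc (Suc n)) 1) > 1"
proof -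
  have "cf_val (replicate (Suc n) 1) \<ge> 1" using cf_ge1[of "replicate (Suc n) 1"] by simp
  thus ?thesis by (simp add: cf_val_Cons del: replicate_Suc) (simp)
qed

lemma qrat_rep: "qrat (cf_val (replicate (Suc n) 1)) = fps_to_fls (st n)"
proof (cases "n = 0")
  case True thus ?thesis by (simp add: qrat_def st_def)
next
  case False
  let ?x = "cf_val (replicate (Suc n) 1)"
  obtain n' where n': "n = Suc n'" using False by (cases n) auto
  have x1: "?x \<noteq> 1" using rep_gt1[of n'] n' by simp
  define E :: "nat list" where "E = (if even n then replicate (2 * (n div 2 - 1)) 1 @ [1,2] else replicate (2*(n div 2)) 1 @ [1,1])"
  have Eprops: "E \<noteq> [] \<and> even (length E) \<and> (\<forall>a\<in>set E. a \<ge> 1) \<and> cf_val E = ?x"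
  proof -
    have "cf_val E = ?x"
    proof (cases "even n")
      case True
      then obtain m where m: "n = 2 * Suc m" using n' by (metis evenE nat.distinct(1) mult_0_right not0_implies_Suc) 
      have "Suc n = 2*m + 3" using m by simp
      hence "replicate (Suc n) (1::nat) = replicate (2*m) 1 @ replicate 3 1" by (simp only: replicate_add)
      hence "replicate (Suc n) (1::nat) = replicate (2*m) 1 @ [1,1,1]" by (simp add: numeral_3_eq_3)
      moreover have "E = replicate (2*m) 1 @ [1,2]" unfolding E_def using True m by simp
      ultimately show ?thesis by (simp add: cf_app del: replicate_Suc)
    next
      case False
      then obtain m where m: "n = 2 * m + 1" by (metis oddE)
      have "Suc n = 2*m + 2" using m by simp
      hence "replicate (Suc n) (1::nat) = replicate (2*m) 1 @ replicate 2 1" by (simp only: replicate_add)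
      hence "replicate (Suc n) (1::nat) = replicate (2*m) 1 @ [1,1]" by (simp add: numeral_2_eq_2)
      moreover have "E = replicate (2*m) 1 @ [1,1]" unfolding E_def using False m by simp
      ultimately show ?thesis by simp
    qed
    moreover have "E \<noteq> [] \<and> even (length E) \<and> (\<forall>a\<in>set E. a \<ge> 1)" unfolding E_def by auto
    ultimately show ?thesis by simp
  qed
  have "(THE as. as \<noteq> [] \<and> even (length as) \<and> (\<forall>a\<in>set as. a \<ge> 1) \<and> cf_val as = ?x) = E"
  proof (rule the_equality)
    show "E \<noteq> [] \<and> even (length E) \<and> (\<forall>a\<in>set E. a \<ge> 1) \<and> cf_val E = ?x" by (rule Eprops)
  next
    fix as assume "as \<noteq> [] \<and> even (length as) \<and> (\<forall>a\<in>set as. a \<ge> 1) \<and> cf_val as = ?x"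
    thus "as = E" using cf_unique[of as E] Eprops by auto
  qed
  hence q: "qrat ?x = qcf_aux True E" using x1 by (simp add: qrat_def qcf_def)
  show ?thesis
  proof (cases "even n")
    case True
    then obtain m where m: "n = 2 * Suc m" using n' by (metis evenE nat.distinct(1) mult_0_right not0_implies_Suc)
    have E: "E = replicate (2*m) 1 @ [1,2]" unfolding E_def using True m by simp
    have t: "qcf_aux True [1,2] = fps_to_fls (Tf 1)"
      using step[of 1] by (simp add: qint1 qint_inv2)
    have "qcf_aux True E = fps_to_fls ((Tf^^m) (Tf 1))"
      unfolding E by (rule qcf_iter[OF _ t Tf_0]) simp
    thus ?thesis using q m by (simp add: st_def funpow_Suc_right del: funpow.simps)
  next
    case False
    then obtain m where m: "n = 2 * m + 1" by (metis oddE)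
    have E: "E = replicate (2*m) 1 @ [1,1]" unfolding E_def using False m by simp
    have t: "qcf_aux True [1,1] = fps_to_fls (1 + fps_X)"
      by (simp add: qint1 qint_inv1)
    have "qcf_aux True E = fps_to_fls ((Tf^^m) (1 + fps_X))"
      unfolding E by (rule qcf_iter[OF _ t]) simp_all
    thus ?thesis using q m by (simp add: st_def)
  qed
qed


lemma golden_props: "1 < golden" "golden < 2" "(golden - 1) * golden = 1"
proof -
  have s1: "sqrt 5 > 1" by (simp add: real_less_rsqrt)
  have s3: "sqrt 5 < 3" by (simp add: real_sqrt_less_iff real_less_lsqrt)
  show "1 < golden" "golden < 2" using s1 s3 unfolding golden_def by simp_all
  have "(golden - 1) * golden = (sqrt 5 * sqrt 5 - 1) / 4" unfolding golden_def by (simp add: field_simps)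
  also have "\<dots> = 1" by simp
  finally show "(golden - 1) * golden = 1" .
qed

lemma golden_floor: "\<lfloor>golden\<rfloor> = 1"
  using golden_props by (simp add: floor_eq_iff)

lemma cf_rem_golden: "cf_rem golden n = golden"
proof (induction n)
  case (Suc n)
  have "golden - 1 \<noteq> 0" using golden_props by simp
  hence "1 / (golden - 1) = golden" using golden_props(3) by (simp add: field_simps)
  thus ?case using Suc golden_floor by simp
qed simp

lemma conv_golden: "convergent_cf golden n = cf_val (replicate n 1)"
proof -
  have "map (cf_digit golden) [0..<n] = map (\<lambda>_. 1) [0..<n]"
    by (simp add: cf_digit_def cf_rem_golden golden_floor)
  thus ?thesis unfolding convergent_cf_def by (simp add: map_replicate_const)
qed

lemma qreal_golden: "qreal golden = P"
proof (rule fps_ext)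
  fix k
  have ev: "\<forall>n\<ge>2*k. fls_nth (qrat (convergent_cf golden (Suc n))) (int k) = P $ k"
  proof (intro allI impI)
    fix n assume n: "2*k \<le> n"
    have b0: "(if even n then 1 else 1 + fps_X :: real fps) $ 0 = 1" by simp
    have "k \<le> n div 2" using n by linarith
    from stab[OF b0 this] have "st n $ k = (Tf^^k) 1 $ k" unfolding eqm_def st_def by simp
    thus "fls_nth (qrat (convergent_cf golden (Suc n))) (int k) = P $ k"
      unfolding conv_golden qrat_rep P_def by simp
  qed
  have "(\<lambda>n. fls_nth (qrat (convergent_cf golden (Suc n))) (int k)) \<longlonglongrightarrow> P $ k"
    by (rule tendsto_eventually) (use ev in \<open>auto simp: eventually_at_top_linorder\<close>)
  hence "lim (\<lambda>n. fls_nth (qrat (convergent_cf golden (Suc n))) (int k)) = P $ k" by (rule limI)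
  thus "qreal golden $ k = P $ k" unfolding qreal_def by simp
qed

theorem mainTheorem7:
  shows "fps_X * (qreal golden)\<^sup>2 - (fps_X\<^sup>2 + fps_X - 1) * qreal golden - 1 = 0"
  unfolding qreal_golden by (rule P_equation)

end
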